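(* Let $X_1,\dots,X_r$ be independent random vectors in $\mathbb{R}^n$, and let $X$ be their coordinate-wise median (i.e. $X_j=\operatorname{median}_{i\in[r]}(X_i)_j$ for each coordinate $j$). Let $C>0$ and $p\ge 0$. If $\Pr[\|X_i\|_2<C]\ge 1-p$ for each $i$, then \[ \Pr[\|X\|_2<C\sqrt{3}]\ge 1-(11p)^{r/4}. \]
   Context: For even $r$ the median is the average of the two middle values. *)

theory Defs
  imports "HOL-Probability.Probability"
begin

definition median :: "real list \<Rightarrow> real" where
  "median xs = (let ys = sort xs; m = length xs div 2 in
     if odd (length xs) then ys ! m else (ys ! (m - 1) + ys ! m) / 2)"

definition coord_median :: "(nat \<Rightarrow> 'a \<Rightarrow> real ^ 'n) \<Rightarrow> nat \<Rightarrow> 'a \<Rightarrow> real ^ 'n" where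
  "coord_median X r \<omega> = (\<chi> j. median (map (\<lambda>i. X i \<omega> $ j) [0..<r]))"

end

theory Submission
  imports Defs
begin

lemma len_filter_sort: "length (filter P (sort xs)) = length (filter P (xs::real list))"
  by (metis mset_filter mset_sort size_mset)

lemma card_sort: "card {i. i < length (sort xs) \<and> P (sort xs ! i)} = card {i. i < length (xs::real list) \<and> P (xs ! i)}"
  by (metis len_filter_sort length_filter_conv_card)

lemma sorted_nth_le_iff:
  fixes ys :: "real list"
  assumes s: "sorted ys" and m: "m < length ys"
  shows "ys ! m \<le> t \<longleftrightarrow> Suc m \<le> card {i. i < length ys \<and> ys ! i \<le> t}"
proof
  assume h: "ys ! m \<le> t"
  have "{..m} \<subseteq> {i. i < length ys \<and> ys ! i \<le> t}"
    using s m h by (auto intro: order_trans[OF sorted_nth_mono])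
  from card_mono[OF _ this] show "Suc m \<le> card {i. i < length ys \<and> ys ! i \<le> t}" by simp
next
  assume h: "Suc m \<le> card {i. i < length ys \<and> ys ! i \<le> t}"
  show "ys ! m \<le> t"
  proof (rule ccontr)
    assume "\<not> ys ! m \<le> t"
    then have "{i. i < length ys \<and> ys ! i \<le> t} \<subseteq> {..<m}"
      using s by (auto simp: not_le) (metis not_le order.strict_trans2 sorted_nth_mono)
    from card_mono[OF _ this] h show False by simp
  qed
qed

lemma sort_nth_le_iff:
  fixes xs :: "real list"
  assumes m: "m < length xs"
  shows "sort xs ! m \<le> t \<longleftrightarrow> Suc m \<le> card {i. i < length xs \<and> xs ! i \<le> t}"
  using sorted_nth_le_iff[of "sort xs" m t] m card_sort[of xs "\<lambda>x. x \<le> t"] by simp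

lemma sorted_median_bounds:
  fixes ys :: "real list"
  assumes s: "sorted ys" and n: "length ys \<ge> 1"
  defines "h \<equiv> length ys div 2"
  shows "ys ! (length ys - 1 - h) \<le> median ys \<and> median ys \<le> ys ! h"
proof (cases "odd (length ys)")
  case True
  then have "length ys - 1 - h = h" using True unfolding h_def by presburger
  then show ?thesis using True s unfolding median_def h_def by (simp add: sorted_sort_id)
next
  case False
  then have e: "length ys - 1 - h = h - 1" "h \<ge> 1" "h < length ys" unfolding h_def using n by auto
  have "ys ! (h - 1) \<le> ys ! h" using s e by (intro sorted_nth_mono) auto
  then show ?thesis using False s e unfolding median_def h_def by (simp add: sorted_sort_id Let_def)
qed

lemma median_count:
  fixes xs :: "real list"
  assumes n: "length xs \<ge> 1"
  shows "length xs \<le> 2 * card {i. i < length xs \<and> \<bar>median xs\<bar> \<le> \<bar>xs ! i\<bar>}"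
proof -
  define ys where "ys = sort xs"
  define n where "n = length xs"
  define h where "h = n div 2"
  have s: "sorted ys" and ly: "length ys = n" unfolding ys_def n_def by auto
  have med: "median ys = median xs" unfolding median_def ys_def by (simp add: sorted_sort_id)
  have b: "ys ! (n - 1 - h) \<le> median xs \<and> median xs \<le> ys ! h"
    using sorted_median_bounds[OF s] ly n med unfolding h_def n_def by simp
  have eq: "card {i. i < length xs \<and> \<bar>median xs\<bar> \<le> \<bar>xs ! i\<bar>} = card {i. i < n \<and> \<bar>median xs\<bar> \<le> \<bar>ys ! i\<bar>}"
    using card_sort[of xs "\<lambda>x. \<bar>median xs\<bar> \<le> \<bar>x\<bar>"] unfolding ys_def n_def by simp
  show ?thesis
  proof (cases "median xs \<ge> 0")
    case True
    have "{h..<n} \<subseteq> {i. i < n \<and> \<bar>median xs\<bar> \<le> \<bar>ys ! i\<bar>}"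
    proof
      fix i assume "i \<in> {h..<n}"
      then have "ys ! h \<le> ys ! i" using s ly by (intro sorted_nth_mono) auto
      then show "i \<in> {i. i < n \<and> \<bar>median xs\<bar> \<le> \<bar>ys ! i\<bar>}" using b True \<open>i \<in> {h..<n}\<close> by auto
    qed
    from card_mono[OF _ this] have "n - h \<le> card {i. i < n \<and> \<bar>median xs\<bar> \<le> \<bar>ys ! i\<bar>}" by simp
    then show ?thesis using eq unfolding n_def h_def by linarith
  next
    case False
    have "{..n - 1 - h} \<subseteq> {i. i < n \<and> \<bar>median xs\<bar> \<le> \<bar>ys ! i\<bar>}"
    proof
      fix i assume "i \<in> {..n - 1 - h}"
      then have i: "i \<le> n - 1 - h" by simp
      then have "i < n" using n unfolding n_def by linarith
      have "ys ! i \<le> ys ! (n - 1 - h)" using s ly i n unfolding n_def by (intro sorted_nth_mono) auto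
      then show "i \<in> {i. i < n \<and> \<bar>median xs\<bar> \<le> \<bar>ys ! i\<bar>}" using b False \<open>i < n\<close> by auto
    qed
    from card_mono[OF _ this] have "Suc (n - 1 - h) \<le> card {i. i < n \<and> \<bar>median xs\<bar> \<le> \<bar>ys ! i\<bar>}" by simp
    then show ?thesis using eq n unfolding n_def h_def by linarith
  qed
qed



lemma norm_sq_vec: "(norm (v::real^'n))^2 = (\<Sum>j\<in>UNIV. (v$j)^2)"
  by (simp add: norm_vec_def L2_set_def sum_nonneg)

lemma det_bound:
  fixes X :: "nat \<Rightarrow> 'a \<Rightarrow> real^'n" and C :: real
  assumes r: "r \<ge> 1" and C: "C > 0" and b: "4 * card {i. i < r \<and> C \<le> norm (X i \<omega>)} < r"
  shows "norm (coord_median X r \<omega>) < C * sqrt 3"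
proof -
  define B where "B = {i. i < r \<and> C \<le> norm (X i \<omega>)}"
  define G where "G = {i. i < r \<and> norm (X i \<omega>) < C}"
  define m where "m = coord_median X r \<omega>"
  define a where "a = real r / 2 - real (card B)"
  have fin: "finite B" "finite G" by (auto simp: B_def G_def)
  have BG: "B \<union> G = {..<r}" "B \<inter> G = {}" by (auto simp: B_def G_def)
  have cardG: "card G = r - card B" using card_Un_disjoint[OF fin BG(2)] BG(1) by simp
  have b': "real (4 * card B) < real r" using b unfolding B_def by (simp only: of_nat_less_iff)
  have a_pos: "a > 0" using b' unfolding a_def by simp
  have cG: "real (card G) = real r - real (card B)" using cardG b by (simp add: B_def of_nat_diff)
  have Gne: "G \<noteq> {}" using cardG b unfolding B_def by auto
  have coord: "a * (m$j)^2 \<le> (\<Sum>i\<in>G. (X i \<omega> $ j)^2)" for j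
  proof -
    define xs where "xs = map (\<lambda>i. X i \<omega> $ j) [0..<r]"
    have mj: "m $ j = median xs" unfolding m_def coord_median_def xs_def by simp
    define A where "A = {i. i < r \<and> \<bar>m$j\<bar> \<le> \<bar>X i \<omega> $ j\<bar>}"
    have eqA: "{i. i < length xs \<and> \<bar>median xs\<bar> \<le> \<bar>xs ! i\<bar>} = A"
      by (auto simp: xs_def A_def mj)
    have rA: "r \<le> 2 * card A" using median_count[of xs] r unfolding eqA by (simp add: xs_def)
    have "A \<subseteq> (A \<inter> G) \<union> B" by (auto simp: A_def B_def G_def)
    then have "card A \<le> card (A \<inter> G) + card B"
      by (meson card_Un_le card_mono fin finite_Un finite_Int le_trans)
    with rA have ca: "a \<le> real (card (A \<inter> G))" unfolding a_def by linarith
    have "a * (m$j)^2 \<le> real (card (A \<inter> G)) * (m$j)^2" using ca by (intro mult_right_mono) auto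
    also have "\<dots> = (\<Sum>i\<in>A \<inter> G. (m$j)^2)" by simp
    also have "\<dots> \<le> (\<Sum>i\<in>A \<inter> G. (X i \<omega> $ j)^2)"
    proof (rule sum_mono)
      fix i assume "i \<in> A \<inter> G"
      then have "\<bar>m$j\<bar> \<le> \<bar>X i \<omega> $ j\<bar>" by (auto simp: A_def)
      then show "(m$j)^2 \<le> (X i \<omega> $ j)^2" by (simp add: abs_le_square_iff)
    qed
    also have "\<dots> \<le> (\<Sum>i\<in>G. (X i \<omega> $ j)^2)" by (rule sum_mono2) (use fin in auto)
    finally show ?thesis .
  qed
  have "a * (norm m)^2 = (\<Sum>j\<in>UNIV. a * (m$j)^2)" by (simp add: norm_sq_vec sum_distrib_left)
  also have "\<dots> \<le> (\<Sum>j\<in>UNIV. \<Sum>i\<in>G. (X i \<omega> $ j)^2)" by (rule sum_mono) (rule coord)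
  also have "\<dots> = (\<Sum>i\<in>G. (norm (X i \<omega>))^2)" by (simp add: norm_sq_vec sum.swap[of _ G])
  also have "\<dots> < (\<Sum>i\<in>G. C^2)"
  proof (rule sum_strict_mono[OF fin(2) Gne])
    fix i assume "i \<in> G"
    then show "(norm (X i \<omega>))^2 < C^2" by (auto simp: G_def intro: power_strict_mono)
  qed
  also have "\<dots> = real (card G) * C^2" by simp
  also have "\<dots> \<le> (3 * a) * C^2" using cG b' unfolding a_def by (intro mult_right_mono) auto
  finally have "a * (norm m)^2 < a * (3 * C^2)" by simp
  then have "(norm m)^2 < 3 * C^2" using a_pos by simp
  then have "norm m < sqrt (3 * C^2)" by (rule real_less_rsqrt)
  also have "sqrt (3 * C^2) = C * sqrt 3" using C by (simp add: real_sqrt_mult)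
  finally show ?thesis unfolding m_def .
qed

lemma choose_mono_n: "n \<le> m \<Longrightarrow> n choose k \<le> m choose k"
proof (induction m)
  case 0 then show ?case by simp
next
  case (Suc m)
  have "m choose k \<le> Suc m choose k" by (cases k) auto
  with Suc show ?case by (cases "n = Suc m") auto
qed

lemma binom4: "real ((4*k) choose k) \<le> 11^k"
proof (induction k)
  case 0 then show ?case by simp
next
  case (Suc k)
  have e1: "fact (4*Suc k) = (fact (4*k) * ((4*k+1)*(4*k+2)*(4*k+3)*(4*k+4)) :: real)"
  proof -
    have "4*Suc k = Suc(Suc(Suc(Suc(4*k))))" by simp
    then show ?thesis by (simp only: fact_Suc) (simp add: algebra_simps)
  qed
  have e2: "fact (3*Suc k) = (fact (3*k) * ((3*k+1)*(3*k+2)*(3*k+3)) :: real)"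
  proof -
    have "3*Suc k = Suc(Suc(Suc(3*k)))" by simp
    then show ?thesis by (simp only: fact_Suc) (simp add: algebra_simps)
  qed
  have e3: "fact (Suc k) = (fact k * (k+1) :: real)" by (simp add: algebra_simps)
  have b1: "real ((4*Suc k) choose Suc k) = fact (4*Suc k) / (fact (Suc k) * fact (3 * Suc k))"
    by (subst binomial_fact) (auto simp: algebra_simps)
  have b0: "real ((4*k) choose k) = fact (4*k) / (fact k * fact (3 * k))"
    by (subst binomial_fact) auto
  have pos: "(0::real) < fact k * fact (3*k)" by simp
  have poly: "real ((4*k+1)*(4*k+2)*(4*k+3)*(4*k+4)) \<le> 11 * real ((k+1)*(3*k+1)*(3*k+2)*(3*k+3))"
  proof -
    have "(4*k+1)*(4*k+2)*(4*k+3)*(4*k+4) \<le> 11 * ((k+1)*(3*k+1)*(3*k+2)*(3*k+3))"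
      by (simp add: algebra_simps)
    then show ?thesis by (metis of_nat_le_iff of_nat_mult of_nat_numeral)
  qed
  have "real ((4*Suc k) choose Suc k) = real ((4*k) choose k) * (real ((4*k+1)*(4*k+2)*(4*k+3)*(4*k+4)) / real ((k+1)*(3*k+1)*(3*k+2)*(3*k+3)))"
    unfolding b1 b0 e1 e2 e3 using pos by (simp add: field_simps)
  also have "\<dots> \<le> 11^k * 11"
  proof (rule mult_mono)
    have bp: "real ((k+1)*(3*k+1)*(3*k+2)*(3*k+3)) > 0" by (simp del: of_nat_mult)
    show "real ((4*k+1)*(4*k+2)*(4*k+3)*(4*k+4)) / real ((k+1)*(3*k+1)*(3*k+2)*(3*k+3)) \<le> 11"
      using poly bp by (simp only: pos_divide_le_eq)
  qed (use Suc.IH in auto)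
  finally show ?case by simp
qed

lemma binom_bound: "r \<le> 4*k \<Longrightarrow> real (r choose k) \<le> 11^k"
  using binom4[of k] choose_mono_n[of r "4*k" k] by (meson of_nat_le_iff order_trans)

lemma final_arith:
  fixes p :: real
  assumes p: "p \<ge> 0" "11 * p < 1" and k: "k \<ge> 1" "r \<le> 4*k"
  shows "real (r choose k) * p^k \<le> (11*p) powr (real r / 4)"
proof (cases "p = 0")
  case True then show ?thesis using k by (simp add: zero_power)
next
  case False
  then have pp: "p > 0" using p by simp
  have "real (r choose k) * p^k \<le> 11^k * p^k" using binom_bound[OF k(2)] pp by (intro mult_right_mono) auto
  also have "\<dots> = (11*p) powr (real k)" using pp by (simp add: powr_realpow power_mult_distrib)
  also have "\<dots> \<le> (11*p) powr (real r / 4)" using k p pp by (intro powr_mono') auto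
  finally show ?thesis .
qed

lemma med_meas:
  fixes X :: "nat \<Rightarrow> 'a \<Rightarrow> real^'n"
  assumes X: "\<And>i. i < r \<Longrightarrow> X i \<in> borel_measurable M"
  shows "coord_median X r \<in> borel_measurable M"
proof -
  have comp: "(\<lambda>\<omega>. X i \<omega> $ j) \<in> borel_measurable M" if "i < r" for i j
    by (rule borel_measurable_continuous_on[OF _ X[OF that]]) (intro continuous_intros)
  have os: "(\<lambda>\<omega>. sort (map (\<lambda>i. X i \<omega> $ j) [0..<r]) ! m) \<in> borel_measurable M" if m: "m < r" for m j
    unfolding borel_measurable_iff_le
  proof
    fix t
    have eq: "{\<omega> \<in> space M. sort (map (\<lambda>i. X i \<omega> $ j) [0..<r]) ! m \<le> t}
      = {\<omega> \<in> space M. real (Suc m) \<le> (\<Sum>i<r. of_bool (X i \<omega> $ j \<le> t))}"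
    proof -
      have "sort (map (\<lambda>i. X i \<omega> $ j) [0..<r]) ! m \<le> t \<longleftrightarrow> real (Suc m) \<le> (\<Sum>i<r. of_bool (X i \<omega> $ j \<le> t))" for \<omega>
      proof -
        have c: "{i. i < length (map (\<lambda>i. X i \<omega> $ j) [0..<r]) \<and> map (\<lambda>i. X i \<omega> $ j) [0..<r] ! i \<le> t}
            = {..<r} \<inter> {i. X i \<omega> $ j \<le> t}" by auto
        have h: "(Suc m \<le> cc) = (real (Suc m) \<le> real cc)" for cc by (simp only: of_nat_le_iff)
        show ?thesis using sort_nth_le_iff[of m "map (\<lambda>i. X i \<omega> $ j) [0..<r]" t] m unfolding c
          by (simp only: sum_of_bool_eq[OF finite_lessThan] length_map length_upt h) simp
      qed
      then show ?thesis by auto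
    qed
    have "(\<lambda>\<omega>. (\<Sum>i<r. of_bool (X i \<omega> $ j \<le> t)) :: real) \<in> borel_measurable M"
    proof (rule borel_measurable_sum)
      fix i assume "i \<in> {..<r}"
      then have [measurable]: "(\<lambda>\<omega>. X i \<omega> $ j) \<in> borel_measurable M" using comp by auto
      show "(\<lambda>\<omega>. of_bool (X i \<omega> $ j \<le> t) :: real) \<in> borel_measurable M"
        unfolding of_bool_def by measurable
    qed
    then show "{\<omega> \<in> space M. sort (map (\<lambda>i. X i \<omega> $ j) [0..<r]) ! m \<le> t} \<in> sets M"
      unfolding eq borel_measurable_iff_ge by blast
  qed
  have cm: "(\<lambda>\<omega>. coord_median X r \<omega> $ j) \<in> borel_measurable M" for j
  proof (cases "r = 0")
    case True
    then show ?thesis by (simp add: coord_median_def median_def)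
  next
    case False
    have [measurable]: "(\<lambda>\<omega>. sort (map (\<lambda>i. X i \<omega> $ j) [0..<r]) ! (r div 2)) \<in> borel_measurable M"
      "(\<lambda>\<omega>. sort (map (\<lambda>i. X i \<omega> $ j) [0..<r]) ! (r div 2 - 1)) \<in> borel_measurable M"
      using os False by auto
    show ?thesis unfolding coord_median_def median_def by (simp add: Let_def)
  qed
  show ?thesis
  proof (subst borel_measurable_euclidean_space, intro ballI)
    fix b :: "real^'n" assume "b \<in> Basis"
    then obtain j where b: "b = axis j 1" by (auto simp: Basis_vec_def)
    show "(\<lambda>x. coord_median X r x \<bullet> b) \<in> borel_measurable M"
      unfolding b inner_axis using cm by simp
  qed
qed

theorem lemma6p2:
  fixes M :: "'a measure" and X :: "nat \<Rightarrow> 'a \<Rightarrow> real ^ 'n"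
    and r :: nat and C p :: real
  assumes "prob_space M"
    and "r \<ge> 1"
    and "\<And>i. i < r \<Longrightarrow> X i \<in> borel_measurable M"
    and "prob_space.indep_vars M (\<lambda>_. borel) X {0..<r}"
    and "C > 0" and "p \<ge> 0"
    and "\<And>i. i < r \<Longrightarrow> measure M {\<omega> \<in> space M. norm (X i \<omega>) < C} \<ge> 1 - p"
  shows "measure M {\<omega> \<in> space M. norm (coord_median X r \<omega>) < C * sqrt 3}
           \<ge> 1 - (11 * p) powr (real r / 4)"
proof -
  interpret prob_space M by (rule assms(1))
  define good where "good = {\<omega> \<in> space M. norm (coord_median X r \<omega>) < C * sqrt 3}"
  define E where "E i = {\<omega> \<in> space M. C \<le> norm (X i \<omega>)}" for i
  define k where "k = (r + 3) div 4"
  define SS where "SS = {S. S \<subseteq> {0..<r} \<and> card S = k}"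
  define U where "U = (\<Union>S\<in>SS. \<Inter>i\<in>S. E i)"
  have k: "k \<ge> 1" "r \<le> 4 * k" using assms(2) unfolding k_def by auto
  have [measurable]: "coord_median X r \<in> borel_measurable M" by (rule med_meas) (rule assms(3))
  have goodm: "good \<in> events" unfolding good_def by measurable
  have Eev: "E i \<in> events" if "i < r" for i
  proof -
    have [measurable]: "X i \<in> borel_measurable M" using assms(3) that .
    show ?thesis unfolding E_def by measurable
  qed
  have PE: "prob (E i) \<le> p" if "i < r" for i
  proof -
    have "space M - E i = {\<omega> \<in> space M. norm (X i \<omega>) < C}" by (auto simp: E_def)
    then have "prob (space M - E i) = 1 - prob (E i)" "prob (space M - E i) \<ge> 1 - p"
      using prob_compl[OF Eev[OF that]] assms(7)[OF that] by auto
    then show ?thesis by linarith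
  qed
  have ind: "indep_sets (\<lambda>i. {X i -` A \<inter> space M | A. A \<in> sets borel}) {0..<r}"
    using assms(4) unfolding indep_vars_def2 by auto
  have Pint: "prob (\<Inter>i\<in>S. E i) = (\<Prod>i\<in>S. prob (E i))" if "S \<in> SS" for S
  proof (rule indep_setsD[OF ind])
    show "S \<subseteq> {0..<r}" "finite S" using that unfolding SS_def by (auto intro: finite_subset)
    show "S \<noteq> {}" using that k unfolding SS_def by auto
    have cl: "{x::real^'n. C \<le> norm x} \<in> sets borel" by measurable
    show "\<forall>j\<in>S. E j \<in> {X j -` A \<inter> space M | A. A \<in> sets borel}"
    proof
      fix j assume "j \<in> S"
      have "E j = X j -` {x. C \<le> norm x} \<inter> space M" by (auto simp: E_def)
      then show "E j \<in> {X j -` A \<inter> space M | A. A \<in> sets borel}" using cl by blast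
    qed
  qed
  have finSS: "finite SS" unfolding SS_def by (rule finite_subset[of _ "Pow {0..<r}"]) auto
  have SSev: "(\<Inter>i\<in>S. E i) \<in> events" if "S \<in> SS" for S
  proof -
    have "S \<subseteq> {0..<r}" "finite S" "S \<noteq> {}" using that k unfolding SS_def by (auto intro: finite_subset)
    then show ?thesis using Eev by (intro sets.finite_INT) auto
  qed
  have Uev: "U \<in> events" unfolding U_def using SSev finSS by (intro sets.finite_UN) auto
  have sub: "space M - good \<subseteq> U"
  proof
    fix \<omega> assume w: "\<omega> \<in> space M - good"
    then have "\<not> 4 * card {i. i < r \<and> C \<le> norm (X i \<omega>)} < r"
      using det_bound[OF assms(2) assms(5), of X \<omega>] unfolding good_def by auto
    then have "k \<le> card {i. i < r \<and> C \<le> norm (X i \<omega>)}" unfolding k_def by linarith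
    then obtain T where T: "T \<subseteq> {i. i < r \<and> C \<le> norm (X i \<omega>)}" "card T = k" "finite T"
      by (rule obtain_subset_with_card_n)
    then have "T \<in> SS" unfolding SS_def by auto
    moreover have "\<omega> \<in> (\<Inter>i\<in>T. E i)" using T w unfolding E_def by auto
    ultimately show "\<omega> \<in> U" unfolding U_def by blast
  qed
  have "prob U \<le> (\<Sum>S\<in>SS. prob (\<Inter>i\<in>S. E i))"
    unfolding U_def using finSS SSev by (intro finite_measure_subadditive_finite) auto
  also have "\<dots> \<le> (\<Sum>S\<in>SS. p ^ k)"
  proof (rule sum_mono)
    fix S assume S: "S \<in> SS"
    have "(\<Prod>i\<in>S. prob (E i)) \<le> (\<Prod>i\<in>S. p)"
      using S PE unfolding SS_def by (intro prod_mono) auto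
    then show "prob (\<Inter>i\<in>S. E i) \<le> p ^ k" using Pint[OF S] S unfolding SS_def by simp
  qed
  also have "\<dots> = real (r choose k) * p ^ k"
    unfolding SS_def using n_subsets[of "{0..<r}" k] by simp
  finally have PU: "prob U \<le> real (r choose k) * p ^ k" .
  have "prob (space M - good) \<le> prob U" using sub Uev by (intro finite_measure_mono)
  then have Pg: "prob good \<ge> 1 - real (r choose k) * p ^ k" using prob_compl[OF goodm] PU by linarith
  show ?thesis
  proof (cases "11 * p < 1")
    case True
    then show ?thesis using Pg final_arith[OF assms(6) True k] unfolding good_def by linarith
  next
    case False
    then have "1 \<le> (11 * p) powr (real r / 4)" by (intro ge_one_powr_ge_zero) auto
    then show ?thesis by (smt (verit) measure_nonneg)
  qed
qed

end
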